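(* Let $p$ be a prime and let $G$ be an abelian group in which every element has order $p^k$ for some $k\ge0$. Let $H=\{x\in G: px=0\}$. Then the map $\mathbb{P}(H)\to\mathbb{P}(G)$ induced by inclusion, $[x]_H\mapsto[x]_G$, is a bijection.
   Context: An abelian group is regarded as a $\mathbb{Z}$-module. For a $\mathbb{Z}$-module $M$ let $M^\circ=M\setminus\{0\}$; define $x\sim'y$ on $M^\circ$ if there exist $m\in M$ and $r,s\in\mathbb{Z}$ with $x=rm$, $y=sm$; let $\sim_M$ be the equivalence relation generated by $\sim'$; and let $\mathbb{P}(M)=M^\circ/\sim_M$, with $[x]_M$ the class of $x$. *)

theory Defs
  imports "HOL-Algebra.Algebra"
begin

text \<open>An abelian group is a commutative group G in HOL-Algebra (written multiplicatively,
so the Z-module action r m is the integer power m [^] r and 0 is the unit).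
For a subset S of the carrier (intended: a subgroup, viewed as a Z-module in its own right),
S-circ = S - {unit}.\<close>

definition punct :: "('a, 'b) monoid_scheme \<Rightarrow> 'a set \<Rightarrow> 'a set" where
  "punct G S = S - {\<one>\<^bsub>G\<^esub>}"

definition sim_basic :: "('a, 'b) monoid_scheme \<Rightarrow> 'a set \<Rightarrow> 'a \<Rightarrow> 'a \<Rightarrow> bool" where
  "sim_basic G S x y \<longleftrightarrow> x \<in> punct G S \<and> y \<in> punct G S \<and>
     (\<exists>m\<in>S. \<exists>(r::int) (s::int). x = m [^]\<^bsub>G\<^esub> r \<and> y = m [^]\<^bsub>G\<^esub> s)"

definition sim_rel :: "('a, 'b) monoid_scheme \<Rightarrow> 'a set \<Rightarrow> ('a \<times> 'a) set" where
  "sim_rel G S = (Id_on (punct G S) \<union> {(x, y). sim_basic G S x y}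
                   \<union> {(x, y). sim_basic G S x y}\<inverse>)\<^sup>+"

definition proj_space :: "('a, 'b) monoid_scheme \<Rightarrow> 'a set \<Rightarrow> 'a set set" where
  "proj_space G S = punct G S // sim_rel G S"

end

theory Submission
  imports Defs "HOL-Computational_Algebra.Primes"
begin



lemma keyB:
  fixes p :: nat and G (structure)
  assumes grp: "group G" and pr: "Factorial_Ring.prime p"
    and ords: "\<forall>x\<in>carrier G. \<exists>k::nat. group.ord G x = p ^ k"
    and m: "m \<in> carrier G"
    and u: "u \<in> punct G {x \<in> carrier G. x [^] p = \<one>}" "u = m [^] (a::int)"
    and v: "v \<in> punct G {x \<in> carrier G. x [^] p = \<one>}" "v = m [^] (b::int)"
  shows "sim_basic G {x \<in> carrier G. x [^] p = \<one>} u v"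
proof -
  interpret group G by (rule grp)
  obtain n where om: "ord m = p ^ n" using ords m by blast
  have p1: "p > 1" using prime_gt_1_nat[OF pr] .
  have u1: "u \<noteq> \<one>" "u [^] p = \<one>" using u(1) unfolding punct_def by auto
  have "n \<noteq> 0"
  proof
    assume "n = 0" then have "m = \<one>" using om ord_eq_1 m by simp
    then show False using u u1 by simp
  qed
  then obtain k where nk: "n = Suc k" by (cases n) auto
  define z where "z = m [^] (p ^ k)"
  have zc: "z \<in> carrier G" using m z_def by simp
  have gen: "\<exists>i::int. w = z [^] i" if w: "w = m [^] (t::int)" "w [^] p = \<one>" for w t
  proof -
    have "\<one> = m [^] (t * int p)" using w m by (simp add: int_pow_pow flip: int_pow_int)
    then have "int (p ^ n) dvd t * int p" using int_pow_eq_id[OF m] om by metis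
    then have "int (p ^ k) * int p dvd t * int p" using nk by (simp add: mult.commute)
    then have "int (p ^ k) dvd t" using p1 by (simp add: dvd_mult_cancel_right)
    then obtain i where ti: "t = int (p ^ k) * i" by (elim dvdE)
    have "w = z [^] i" using w ti m unfolding z_def by (simp add: int_pow_pow flip: int_pow_int)
    then show ?thesis by blast
  qed
  have "z [^] p = \<one>" using m om nk unfolding z_def
    by (simp add: nat_pow_pow mult.commute) (metis pow_ord_eq_1)
  then have zH: "z \<in> {x \<in> carrier G. x [^] p = \<one>}" using zc by simp
  obtain i :: int where ui: "u = z [^] i" using gen[OF u(2) u1(2)] by blast
  have "v [^] p = \<one>" using v(1) unfolding punct_def by simp
  then obtain j :: int where vj: "v = z [^] j" using gen[OF v(2)] by blast
  have "\<exists>m\<in>{x \<in> carrier G. x [^] p = \<one>}. \<exists>(r::int) (s::int). u = m [^] r \<and> v = m [^] s"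
    using zH ui vj by blast
  then show ?thesis using u(1) v(1) unfolding sim_basic_def by simp
qed

lemma red_ex:
  fixes p :: nat and G (structure)
  assumes grp: "group G" and pr: "Factorial_Ring.prime p"
    and ords: "\<forall>x\<in>carrier G. \<exists>k::nat. group.ord G x = p ^ k"
    and g: "g \<in> punct G (carrier G)"
  shows "\<exists>u. u \<in> punct G {x \<in> carrier G. x [^] p = \<one>} \<and> (\<exists>r::int. u = g [^] r)"
proof -
  interpret group G by (rule grp)
  have gc: "g \<in> carrier G" "g \<noteq> \<one>" using g unfolding punct_def by auto
  obtain n where om: "ord g = p ^ n" using ords gc by blast
  have p1: "p > 1" using prime_gt_1_nat[OF pr] .
  have "n \<noteq> 0"
  proof
    assume "n = 0" then have "g = \<one>" using om ord_eq_1 gc by simp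
    then show False using gc by simp
  qed
  then obtain k where nk: "n = Suc k" by (cases n) auto
  define z where "z = g [^] (p ^ k)"
  have zc: "z \<in> carrier G" using gc z_def by simp
  have "z [^] p = \<one>" using gc om nk unfolding z_def
    by (simp add: nat_pow_pow mult.commute) (metis pow_ord_eq_1)
  moreover have "z \<noteq> \<one>"
  proof
    assume "z = \<one>"
    then have "p ^ n dvd p ^ k" using pow_eq_id[OF gc(1)] om z_def by metis
    then show False using nk p1 by (simp add: dvd_power_iff_le)
  qed
  moreover have "z = g [^] int (p ^ k)" unfolding z_def by (simp only: int_pow_int)
  ultimately show ?thesis using zc unfolding punct_def by blast
qed

lemma sim_equiv: "equiv (punct G S) (sim_rel G S)"
proof -
  let ?B = "Id_on (punct G S) \<union> {(x, y). sim_basic G S x y} \<union> {(x, y). sim_basic G S x y}\<inverse>"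
  have sub: "?B \<subseteq> punct G S \<times> punct G S" unfolding sim_basic_def by auto
  have "sym ?B" unfolding sym_def by auto
  then have "sym (?B\<^sup>+)" by (rule sym_trancl)
  moreover have "?B\<^sup>+ \<subseteq> punct G S \<times> punct G S" using sub by (rule trancl_subset_Sigma)
  moreover have "Id_on (punct G S) \<subseteq> ?B\<^sup>+" by auto
  moreover have "trans (?B\<^sup>+)" by (rule trans_trancl)
  moreover have "refl_on (punct G S) (?B\<^sup>+)" unfolding refl_on_def by auto
  ultimately show ?thesis unfolding sim_rel_def by (intro equivI) simp_all
qed

lemma sim_mono:
  assumes "S \<subseteq> T" shows "sim_rel G S \<subseteq> sim_rel G T"
proof -
  have "sim_basic G S x y \<Longrightarrow> sim_basic G T x y" for x y
    using assms unfolding sim_basic_def punct_def by blast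
  moreover have "punct G S \<subseteq> punct G T" using assms unfolding punct_def by blast
  ultimately show ?thesis unfolding sim_rel_def
    by (intro trancl_mono_subset) blast
qed

lemma basic_in_rel: "sim_basic G S x y \<Longrightarrow> (x, y) \<in> sim_rel G S"
  unfolding sim_rel_def by auto

theorem theorem4p11:
  fixes G :: "('a, 'b) monoid_scheme" and p :: nat
  assumes "comm_group G"
    and "Factorial_Ring.prime p"
    and "\<forall>x\<in>carrier G. \<exists>k::nat. group.ord G x = p ^ k"
  defines "H \<equiv> {x \<in> carrier G. x [^]\<^bsub>G\<^esub> p = \<one>\<^bsub>G\<^esub>}"
  shows "(\<forall>x\<in>punct G H. sim_rel G (carrier G) `` (sim_rel G H `` {x})
                          = sim_rel G (carrier G) `` {x})
         \<and> bij_betw (\<lambda>C. sim_rel G (carrier G) `` C) (proj_space G H) (proj_space G (carrier G))"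
proof -
  interpret comm_group G by (rule assms(1))
  have grp: "group G" by (rule is_group)
  let ?RG = "sim_rel G (carrier G)" and ?RH = "sim_rel G H"
  have HG: "H \<subseteq> carrier G" unfolding H_def by auto
  have mono: "?RH \<subseteq> ?RG" using sim_mono[OF HG] .
  have eqG: "equiv (punct G (carrier G)) ?RG" and eqH: "equiv (punct G H) ?RH" by (rule sim_equiv)+
  have cls: "?RG `` (?RH `` {x}) = ?RG `` {x}" if x: "x \<in> punct G H" for x
  proof
    show "?RG `` (?RH `` {x}) \<subseteq> ?RG `` {x}"
    proof
      fix z assume "z \<in> ?RG `` (?RH `` {x})"
      then obtain y where "(x, y) \<in> ?RH" "(y, z) \<in> ?RG" by blast
      then have "(x, y) \<in> ?RG" "(y, z) \<in> ?RG" using mono by auto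
      then have "(x, z) \<in> ?RG" using eqG unfolding equiv_def trans_def by blast
      then show "z \<in> ?RG `` {x}" by blast
    qed
    have "(x, x) \<in> ?RH" using x eqH unfolding equiv_def refl_on_def by blast
    then show "?RG `` {x} \<subseteq> ?RG `` (?RH `` {x})" by blast
  qed
  define red where "red g = (SOME u. u \<in> punct G H \<and> (\<exists>r::int. u = g [^]\<^bsub>G\<^esub> r))" for g
  have redP: "red g \<in> punct G H \<and> (\<exists>r::int. red g = g [^]\<^bsub>G\<^esub> r)" if "g \<in> punct G (carrier G)" for g
    unfolding red_def
    by (rule someI_ex) (use red_ex[OF grp assms(2,3) that] in \<open>simp add: H_def\<close>)
  have base: "(red x, red y) \<in> ?RH" if "sim_basic G (carrier G) x y" for x y
  proof -
    from that obtain m r s where m: "m \<in> carrier G" and xy: "x = m [^]\<^bsub>G\<^esub> (r::int)" "y = m [^]\<^bsub>G\<^esub> (s::int)"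
      and xyp: "x \<in> punct G (carrier G)" "y \<in> punct G (carrier G)"
      unfolding sim_basic_def by blast
    obtain a where a: "red x = x [^]\<^bsub>G\<^esub> (a::int)" "red x \<in> punct G H" using redP[OF xyp(1)] by blast
    obtain b where b: "red y = y [^]\<^bsub>G\<^esub> (b::int)" "red y \<in> punct G H" using redP[OF xyp(2)] by blast
    have "red x = m [^]\<^bsub>G\<^esub> (r * a)" using a xy m by (simp add: int_pow_pow)
    moreover have "red y = m [^]\<^bsub>G\<^esub> (s * b)" using b xy m by (simp add: int_pow_pow)
    ultimately have "sim_basic G H (red x) (red y)"
      using keyB[OF grp assms(2,3) m] a(2) b(2) unfolding H_def by blast
    then show ?thesis by (rule basic_in_rel)
  qed
  have step1: "(red x, red y) \<in> ?RH" if xyB: "(x, y) \<in> Id_on (punct G (carrier G)) \<union> {(x, y). sim_basic G (carrier G) x y}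
                   \<union> {(x, y). sim_basic G (carrier G) x y}\<inverse>" for x y
  proof -
    consider "x = y" "x \<in> punct G (carrier G)" | "sim_basic G (carrier G) x y" | "sim_basic G (carrier G) y x"
      using xyB by blast
    then show ?thesis
    proof cases
      case 1
      then show ?thesis using redP[OF 1(2)] eqH unfolding equiv_def refl_on_def by blast
    next
      case 2 then show ?thesis by (rule base)
    next
      case 3 then have "(red y, red x) \<in> ?RH" by (rule base)
      then show ?thesis using eqH unfolding equiv_def sym_def by blast
    qed
  qed
  have stepRG: "(red x, red y) \<in> ?RH" if "(x, y) \<in> ?RG" for x y
    using that unfolding sim_rel_def[of G "carrier G"]
  proof (induction rule: trancl_induct)
    case (base y) then show ?case using step1 by blast
  next
    case (step y z)
    then have "(red y, red z) \<in> ?RH" using step1 by blast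
    then show ?case using step.IH eqH unfolding equiv_def trans_def by blast
  qed
  have xred: "(x, red x) \<in> ?RH" if x: "x \<in> punct G H" for x
  proof -
    have xp: "x \<in> punct G (carrier G)" using x HG unfolding punct_def by blast
    obtain a where a: "red x = x [^]\<^bsub>G\<^esub> (a::int)" "red x \<in> punct G H" using redP[OF xp] by blast
    have xH: "x \<in> H" "x \<in> carrier G" using x HG unfolding punct_def by auto
    have "x = x [^]\<^bsub>G\<^esub> (1::int)" using xH by simp
    then have "sim_basic G H x (red x)" unfolding sim_basic_def using x a xH by blast
    then show ?thesis by (rule basic_in_rel)
  qed
  have redG: "(red g, g) \<in> ?RG" if g: "g \<in> punct G (carrier G)" for g
  proof -
    obtain a where a: "red g = g [^]\<^bsub>G\<^esub> (a::int)" "red g \<in> punct G H" using redP[OF g] by blast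
    have gc: "g \<in> carrier G" using g unfolding punct_def by auto
    have "g = g [^]\<^bsub>G\<^esub> (1::int)" using gc by simp
    moreover have "red g \<in> punct G (carrier G)" using a(2) HG unfolding punct_def by blast
    ultimately have "sim_basic G (carrier G) (red g) g" unfolding sim_basic_def using g a gc by blast
    then show ?thesis by (rule basic_in_rel)
  qed
  have inj: "inj_on (\<lambda>C. ?RG `` C) (proj_space G H)"
  proof (rule inj_onI)
    fix C D assume C: "C \<in> proj_space G H" and D: "D \<in> proj_space G H" and eq: "?RG `` C = ?RG `` D"
    obtain x where x: "x \<in> punct G H" "C = ?RH `` {x}" using C unfolding proj_space_def quotient_def by blast
    obtain y where y: "y \<in> punct G H" "D = ?RH `` {y}" using D unfolding proj_space_def quotient_def by blast
    have "?RG `` {x} = ?RG `` {y}" using eq x y cls by simp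
    moreover have xp: "x \<in> punct G (carrier G)" using x HG unfolding punct_def by blast
    ultimately have "(x, y) \<in> ?RG" using eqG by (metis eq_equiv_class_iff2 equiv_class_self
          equiv_class_eq_iff y(1) HG punct_def Diff_iff subsetD)
    then have "(red x, red y) \<in> ?RH" by (rule stepRG)
    then have "(x, y) \<in> ?RH" using xred[OF x(1)] xred[OF y(1)] eqH unfolding equiv_def trans_def sym_def by blast
    then show "C = D" using x y eqH by (simp add: equiv_class_eq)
  qed
  have img: "(\<lambda>C. ?RG `` C) ` proj_space G H = proj_space G (carrier G)"
  proof
    show "(\<lambda>C. ?RG `` C) ` proj_space G H \<subseteq> proj_space G (carrier G)"
    proof
      fix E assume "E \<in> (\<lambda>C. ?RG `` C) ` proj_space G H"
      then obtain x where x: "x \<in> punct G H" "E = ?RG `` (?RH `` {x})"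
        unfolding proj_space_def quotient_def by blast
      have xp: "x \<in> punct G (carrier G)" using x HG unfolding punct_def by blast
      show "E \<in> proj_space G (carrier G)" using x cls xp unfolding proj_space_def quotient_def by blast
    qed
    show "proj_space G (carrier G) \<subseteq> (\<lambda>C. ?RG `` C) ` proj_space G H"
    proof
      fix E assume "E \<in> proj_space G (carrier G)"
      then obtain g where g: "g \<in> punct G (carrier G)" "E = ?RG `` {g}"
        unfolding proj_space_def quotient_def by blast
      have r: "red g \<in> punct G H" using redP[OF g(1)] by blast
      have "?RG `` {red g} = ?RG `` {g}" using redG[OF g(1)] eqG by (simp add: equiv_class_eq)
      then have "E = ?RG `` (?RH `` {red g})" using cls[OF r] g by simp
      moreover have "?RH `` {red g} \<in> proj_space G H" using r unfolding proj_space_def quotient_def by blast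
      ultimately show "E \<in> (\<lambda>C. ?RG `` C) ` proj_space G H" by blast
    qed
  qed
  show ?thesis using cls inj img unfolding bij_betw_def by blast
qed


end
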